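(* Let $\alpha>-2$ and let $N\ge N_\alpha$ be an integer. Then $$u_{\beta_0}(r)\le-(4+\alpha)\ln r+\ln\big[2(4+\alpha)(N-2)(N-4)\big]\quad\text{for all }r>0,$$ and consequently $|x|^\alpha e^{u_\beta(x)}\le\frac{N^2(N-4)^2}{16|x|^4}$ for all $x\in\mathbb{R}^N\setminus\{0\}$ and all $\beta\le\beta_0$.
   Context: Fix an integer $N\ge3$ and $\alpha>-2$. For $\beta\in\mathbb{R}$, $u_\beta$ denotes the radial function $u_\beta(x)=u_\beta(r)$, $r=|x|$, solving the initial value problem $\Delta^2u=|x|^\alpha e^u$ for $r\in[0,R_\beta)$, $u'(0)=u'''(0)=0$, $u(0)=0$, $\Delta u(0)=\beta$, where $\Delta u=u''+\frac{N-1}{r}u'$ is the radial Laplacian in $\mathbb{R}^N$ and $[0,R_\beta)$ is the maximal interval of existence. $\beta_0:=\sup\{\beta\in\mathbb{R}:R_\beta=\infty\}$; it is known that $\beta_0$ is a finite negative number and that $R_\beta=\infty$ if and only if $\beta\le\beta_0$. $N_\alpha$ denotes the unique root in $(5,\infty)$ of the equation $\frac{N^2(N-4)^2}{16}=2(4+\alpha)(N-2)(N-4)$ (in the variable $N$). *)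

theory Defs
  imports "HOL-Analysis.Analysis"
begin

text \<open>Radial solution of the IVP  Delta^2 u = r^alpha e^u, u(0)=0, u'(0)=u'''(0)=0,
  Delta u(0)=beta in R^N, existing on all of [0,infinity), written in the standard
  integral form (w plays the role of the radial Laplacian of u):
  w(r) = beta + int_0^r s^(1-N) int_0^s t^(N-1) t^alpha e^(u t) dt ds,
  u(r) = int_0^r s^(1-N) int_0^s t^(N-1) w(t) dt ds.\<close>
definition global_radial_sol :: "nat \<Rightarrow> real \<Rightarrow> real \<Rightarrow> (real \<Rightarrow> real) \<Rightarrow> bool" where
  "global_radial_sol N \<alpha> \<beta> u \<longleftrightarrow>
     continuous_on {0..} u \<and> u 0 = 0 \<and>
     (\<exists>w. continuous_on {0..} w \<and> w 0 = \<beta> \<and>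
        (\<forall>r\<ge>0. ((\<lambda>s. s powr (1 - real N) *
                    integral {0..s} (\<lambda>t. t powr (real N - 1 + \<alpha>) * exp (u t)))
                 has_integral (w r - \<beta>)) {0..r}) \<and>
        (\<forall>r\<ge>0. ((\<lambda>s. s powr (1 - real N) *
                    integral {0..s} (\<lambda>t. t powr (real N - 1) * w t))
                 has_integral (u r)) {0..r}))"

definition beta0 :: "nat \<Rightarrow> real \<Rightarrow> real" where
  "beta0 N \<alpha> = Sup {\<beta>. \<exists>u. global_radial_sol N \<alpha> \<beta> u}"

definition N_alpha :: "real \<Rightarrow> real" where
  "N_alpha \<alpha> = (THE M::real. M > 5 \<and>
      M^2 * (M - 4)^2 / 16 = 2 * (4 + \<alpha>) * (M - 2) * (M - 4))"

end

theory Submission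
  imports Defs
begin

lemma deriv_cmp:
  fixes f g f' g' :: "real \<Rightarrow> real"
  assumes "a \<le> b"
    and "\<And>x. a \<le> x \<Longrightarrow> x \<le> b \<Longrightarrow> (f has_real_derivative f' x) (at x)"
    and "\<And>x. a \<le> x \<Longrightarrow> x \<le> b \<Longrightarrow> (g has_real_derivative g' x) (at x)"
    and "\<And>x. a \<le> x \<Longrightarrow> x \<le> b \<Longrightarrow> g' x \<le> f' x"
    and "g a \<le> f a"
  shows "g b \<le> f b"
proof -
  have "(\<lambda>x. f x - g x) a \<le> (\<lambda>x. f x - g x) b"
  proof (rule DERIV_nonneg_imp_nondecreasing[OF assms(1)])
    fix x assume "a \<le> x" "x \<le> b"
    then show "\<exists>y. ((\<lambda>x. f x - g x) has_real_derivative y) (at x) \<and> 0 \<le> y"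
      using assms(2-4) by (intro exI[of _ "f' x - g' x"]) (auto intro!: DERIV_diff)
  qed
  then show ?thesis using assms(5) by simp
qed

lemma exp_weight_mono:
  fixes g h :: "real \<Rightarrow> real" and l :: real
  assumes "\<And>t. (g has_real_derivative (l * g t + h t)) (at t)"
    and "\<And>t. x \<le> t \<Longrightarrow> t \<le> y \<Longrightarrow> h t \<ge> 0" and "x \<le> y"
  shows "exp (-l*x) * g x \<le> exp (-l*y) * g y"
proof -
  have d: "((\<lambda>t. exp (-l*t) * g t) has_real_derivative exp (-l*t) * h t) (at t)" for t
  proof -
    have "((\<lambda>t. exp (-l*t) * g t) has_real_derivative
          (exp (-l*t) * (-l)) * g t + exp (-l*t) * (l * g t + h t)) (at t)"
      by (rule derivative_eq_intros assms(1) refl)+ simp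
    then show ?thesis by (simp add: algebra_simps)
  qed
  have "(\<lambda>t. exp (-l*t) * g t) x \<le> (\<lambda>t. exp (-l*t) * g t) y"
  proof (rule DERIV_nonneg_imp_nondecreasing[OF assms(3)])
    fix t assume "x \<le> t" "t \<le> y"
    then show "\<exists>y. ((\<lambda>t. exp (-l*t) * g t) has_real_derivative y) (at t) \<and> 0 \<le> y"
      using d[of t] assms(2)[of t] by (intro exI[of _ "exp (-l*t) * h t"]) auto
  qed
  then show ?thesis by simp
qed

lemma exp_quad_lower:
  fixes y :: real assumes "y \<ge> 0" shows "y^2/4 \<le> exp y"
proof -
  have "y/2 \<le> exp (y/2)" using exp_ge_add_one_self[of "y/2"] by linarith
  then have "(y/2)^2 \<le> (exp (y/2))^2" using assms by (intro power_mono) auto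
  also have "\<dots> = exp y" by (simp add: power2_eq_square flip: exp_add)
  finally show ?thesis by (simp add: power_divide)
qed

lemma stepA:
  fixes g h :: "real \<Rightarrow> real" and l A B :: real
  assumes l: "l < 0"
    and dg: "\<And>t. (g has_real_derivative (l * g t + h t)) (at t)"
    and h: "\<And>t. h t \<ge> 0"
    and bd: "\<And>t. t \<le> 0 \<Longrightarrow> \<bar>g t\<bar> \<le> A + B * \<bar>t\<bar>" and B: "B \<ge> 0"
  shows "g t1 \<ge> 0"
proof (rule ccontr)
  assume "\<not> g t1 \<ge> 0"
  then have neg: "g t1 < 0" by simp
  define \<delta> where "\<delta> = - exp (-l*t1) * g t1"
  have \<delta>: "\<delta> > 0" using neg by (simp add: \<delta>_def mult_pos_neg)
  define c where "c = -l"
  have c: "c > 0" using l by (simp add: c_def)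
  define A' where "A' = \<bar>A\<bar> + B"
  have A': "A' \<ge> 0" using B by (simp add: A'_def)
  define y where "y = max 1 (-t1) + 4*A'/(\<delta>*c^2) + 1"
  have q0: "4*A'/(\<delta>*c^2) \<ge> 0" using A' \<delta> c by simp
  have y1: "y \<ge> 1" and yt: "-y \<le> t1" and y0: "-y \<le> 0"
    using q0 by (auto simp: y_def)
  have ybig: "y > 4*A'/(\<delta>*c^2)" using y_def by simp
  have mono: "exp (-l*(-y)) * g (-y) \<le> exp (-l*t1) * g t1"
    using exp_weight_mono[OF dg h, of "-y" t1] yt by auto
  then have "exp (-(c*y)) * g (-y) \<le> - \<delta>" by (simp add: \<delta>_def c_def)
  then have "exp (c*y) * (exp (-(c*y)) * g (-y)) \<le> exp (c*y) * (- \<delta>)"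
    by (intro mult_left_mono) auto
  then have "g (-y) \<le> - (exp (c*y) * \<delta>)" by (simp add: mult.assoc[symmetric] flip: exp_add)
  then have g1: "g (-y) \<le> - \<delta> * exp (c*y)" by (simp only: mult.commute)
  moreover have "g (-y) \<ge> -(A + B*y)" using bd[of "-y"] y0 y1 by auto
  ultimately have "\<delta> * exp (c*y) \<le> A + B*y" by linarith
  also have "A + B*y \<le> A' * y"
  proof -
    have "\<bar>A\<bar> * 1 \<le> \<bar>A\<bar> * y" using y1 by (intro mult_left_mono) auto
    then show ?thesis unfolding A'_def by (simp add: distrib_right)
  qed
  finally have d1: "\<delta> * exp (c*y) \<le> A' * y" .
  have "(c*y)^2/4 \<le> exp (c*y)" using c y1 by (intro exp_quad_lower) auto
  then have "\<delta> * ((c*y)^2/4) \<le> \<delta> * exp (c*y)" using \<delta> by (intro mult_left_mono) auto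
  with d1 have "\<delta> * ((c*y)^2/4) \<le> A' * y" by linarith
  then have "(\<delta> * c^2 * y / 4) * y \<le> A' * y" by (simp add: power2_eq_square algebra_simps)
  then have "\<delta> * c^2 * y / 4 \<le> A'" using y1 by simp
  moreover have "A' < \<delta>*c^2*y/4" using ybig \<delta> c by (simp add: field_simps)
  ultimately show False by linarith
qed

lemma blowup_ineq:
  fixes K D Zi m zs :: real
  assumes K: "K > 0" and Z1: "Zi \<ge> 1" and D1: "D \<ge> 1" and KD: "K*D \<ge> 1"
    and m: "m \<ge> 1" and zs: "zs \<ge> m * Zi"
  shows "K * (D/(Zi*m))^4 * zs^5 \<ge> 1"
proof -
  have pos: "Zi > 0" "m > 0" using Z1 m by auto
  have "(m*Zi)^5 \<le> zs^5" using zs pos by (intro power_mono) auto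
  then have "K * (D/(Zi*m))^4 * (m*Zi)^5 \<le> K * (D/(Zi*m))^4 * zs^5"
    using K by (intro mult_left_mono) auto
  moreover have "K * (D/(Zi*m))^4 * (m*Zi)^5 = K * D^4 * (m*Zi)"
    using pos by (simp add: field_simps power_mult_distrib) (simp add: power_def algebra_simps)
  moreover have "K * D^4 * (m*Zi) \<ge> K * D"
  proof -
    have "D \<le> D^4" using D1 by (simp add: power_increasing[of 1 4 D, simplified])
    moreover have "1 \<le> m*Zi" using m Z1 by (metis mult_mono' mult_1 zero_le_one)
    ultimately have "D * 1 \<le> D^4 * (m*Zi)" using D1 by (intro mult_mono) auto
    then show ?thesis using K by (simp add: mult.assoc mult_left_mono)
  qed
  ultimately show ?thesis using KD by linarith
qed

lemma blowup:
  fixes z :: "real \<Rightarrow> real" and K Zi ti :: real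
  assumes K: "K > 0" and Z1: "Zi \<ge> 1" and Z2: "Zi \<ge> 1 + 1/K" and zt0: "z ti \<ge> Zi"
    and mono: "\<And>s t. ti \<le> s \<Longrightarrow> s \<le> t \<Longrightarrow> z s \<le> z t"
    and grow: "\<And>s t. ti \<le> s \<Longrightarrow> s \<le> t \<Longrightarrow> t \<le> s + 1 \<Longrightarrow> z t \<ge> z s + K*(t-s)^4 * z s ^ 6"
  shows False
proof -
  define D where "D = 1 + 1/K"
  define tk where "tk k = ti + 2*D/Zi*(1 - (1/2)^k)" for k::nat
  have D1: "D \<ge> 1" and DZ: "D \<le> Zi" and KD: "K*D \<ge> 1"
    using K Z2 by (auto simp: D_def field_simps)
  have Zi: "Zi > 0" using Z1 by simp
  have DZ1: "D/Zi \<le> 1" using DZ Zi by simp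
  have tk_ge: "tk k \<ge> ti" for k
  proof -
    have "(1/2::real)^k \<le> 1" by (simp add: power_le_one)
    then show ?thesis using D1 Zi by (simp add: tk_def)
  qed
  have tk_le: "tk k \<le> ti + 2" for k
  proof -
    have "1 - (1/2::real)^k \<le> 1" "1 - (1/2::real)^k \<ge> 0" by (auto simp: power_le_one)
    then have "D/Zi*(1 - (1/2)^k) \<le> 1 * 1" using DZ1 D1 Zi by (intro mult_mono) auto
    then show ?thesis by (simp add: tk_def)
  qed
  have tk_Suc: "tk (Suc k) = tk k + D/(Zi * 2^k)" for k
    by (simp add: tk_def algebra_simps power_one_over)
  have main: "z (tk k) \<ge> 2^k * Zi" for k
  proof (induction k)
    case 0
    then show ?case using zt0 by (simp add: tk_def)
  next
    case (Suc k)
    define s where "s = tk k"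
    define h where "h = D/(Zi * 2^k)"
    have h0: "h > 0" using D1 Zi by (simp add: h_def)
    have h1: "h \<le> 1"
    proof -
      have "D/(Zi*2^k) \<le> D/Zi" using D1 Zi by (intro divide_left_mono) auto
      then show ?thesis using DZ1 h_def by linarith
    qed
    have zs: "z s \<ge> 2^k * Zi" using Suc s_def by simp
    have zs0: "z s > 0" using zs Zi by (smt (verit) mult_pos_pos zero_less_power)
    have g: "z (s + h) \<ge> z s + K*h^4 * z s ^ 6"
      using grow[of s "s+h"] tk_ge h0 h1 by (auto simp: s_def)
    have "K * (D/(Zi*2^k))^4 * (z s)^5 \<ge> 1"
      by (rule blowup_ineq[OF K Z1 D1 KD _ ]) (use zs in \<open>auto simp: mult.commute\<close>)
    then have "K*h^4 * z s ^ 5 \<ge> 1" by (simp add: h_def)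
    then have "z s * 1 \<le> z s * (K*h^4 * z s ^ 5)" using zs0 by (intro mult_left_mono) auto
    then have "z s \<le> K*h^4 * z s ^ 6" by (simp add: power_Suc algebra_simps eval_nat_numeral)
    with g have "z (s+h) \<ge> 2 * z s" by linarith
    moreover have "tk (Suc k) = s + h" by (simp add: tk_Suc s_def h_def)
    ultimately show ?case using zs by simp
  qed
  obtain k where k: "z (ti + 2) < 2^k" using real_arch_pow[of 2 "z (ti+2)"] by auto
  have "z (tk k) \<le> z (ti + 2)" using mono tk_ge tk_le by auto
  moreover have "2^k * Zi \<ge> (2::real)^k" using Z1 by simp
  ultimately show False using main[of k] k by linarith
qed

lemma stepB_aux:
  fixes g h :: "real \<Rightarrow> real" and l c s t :: real and n :: nat
  assumes l: "l < 0" and dg: "\<And>t. (g has_real_derivative (l * g t + h t)) (at t)"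
    and gs: "g s \<ge> 0" and c: "c \<ge> 0"
    and hb: "\<And>t. s \<le> t \<Longrightarrow> t \<le> s + 1 \<Longrightarrow> h t \<ge> c * (t - s)^n"
    and t: "s \<le> t" "t \<le> s + 1"
  shows "g t \<ge> exp l * (c * (t - s)^(Suc n) / real (Suc n))"
proof -
  define \<psi> where "\<psi> \<tau> = exp (-l*(\<tau> - s)) * g \<tau>" for \<tau>
  define \<phi> where "\<phi> \<tau> = (c / real (Suc n)) * (\<tau> - s)^(Suc n)" for \<tau>
  have d\<psi>: "(\<psi> has_real_derivative exp (-l*(\<tau> - s)) * h \<tau>) (at \<tau>)" for \<tau>
    unfolding \<psi>_def by (rule derivative_eq_intros dg refl)+ (simp add: algebra_simps)
  have nz: "real (Suc n) \<noteq> 0" by (simp only: of_nat_eq_0_iff)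
  have d\<phi>: "(\<phi> has_real_derivative c * (\<tau> - s)^n) (at \<tau>)" for \<tau>
    unfolding \<phi>_def by (rule derivative_eq_intros refl)+ (use nz in simp)
  have "\<phi> t \<le> \<psi> t"
  proof (rule deriv_cmp[OF t(1)])
    fix x assume x: "s \<le> x" "x \<le> t"
    show "(\<psi> has_real_derivative exp (-l*(x - s)) * h x) (at x)" by (rule d\<psi>)
    show "(\<phi> has_real_derivative c * (x - s)^n) (at x)" by (rule d\<phi>)
    have h1: "h x \<ge> c * (x - s)^n" using hb x t by auto
    have h0: "c * (x - s)^n \<ge> 0" using c x by simp
    have "l * (x - s) \<le> 0" using l x by (intro mult_nonpos_nonneg) auto
    then have "exp (-l*(x - s)) \<ge> 1" by simp
    then have "1 * h x \<le> exp (-l*(x - s)) * h x" using h1 h0 by (intro mult_right_mono) auto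
    then show "c * (x - s)^n \<le> exp (-l*(x - s)) * h x" using h1 by simp
  next
    show "\<phi> s \<le> \<psi> s" using gs by (simp add: \<phi>_def \<psi>_def)
  qed
  have g_eq: "g t = exp (l*(t - s)) * \<psi> t" by (simp add: \<psi>_def mult.assoc[symmetric] flip: exp_add)
  have e: "exp l \<le> exp (l*(t - s))"
  proof -
    have "l * (t - s - 1) \<ge> 0" using l t by (intro mult_nonpos_nonpos) auto
    then show ?thesis by (simp add: algebra_simps)
  qed
  have \<phi>0: "\<phi> t \<ge> 0" using c t by (simp add: \<phi>_def)
  have "exp l * \<phi> t \<le> exp (l*(t - s)) * \<phi> t" using e \<phi>0 by (rule mult_right_mono)
  also have "\<dots> \<le> exp (l*(t - s)) * \<psi> t" using \<open>\<phi> t \<le> \<psi> t\<close> by (intro mult_left_mono) auto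
  finally show ?thesis using g_eq by (simp add: \<phi>_def)
qed

lemma vieta:
  fixes N cc k sg1 sg2 l1 l2 l3 l4 :: real
  assumes k: "k = (N-4)/2" and S: "sg1^2 + sg2^2 = k^2 + N^2/4" and P: "sg1^2 * sg2^2 = k^2*(N^2/4) - cc"
    and l: "l4 = sg1 - k" "l3 = sg2 - k" "l2 = -k - sg2" "l1 = -k - sg1"
  shows "l1+l2+l3+l4 = -(2*N-8)"
    "l1*l2+l1*l3+l1*l4+l2*l3+l2*l4+l3*l4 = (N-4)^2 - 2*(N-2)"
    "l1*l2*l3+l1*l2*l4+l1*l3*l4+l2*l3*l4 = 2*(N-2)*(N-4)"
    "l1*l2*l3*l4 = -cc"
proof -
  have a: "l1*l4 = k^2 - sg1^2" "l2*l3 = k^2 - sg2^2" "l1+l4 = -2*k" "l2+l3 = -2*k"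
    unfolding l by (simp_all add: power2_eq_square algebra_simps)
  show "l1+l2+l3+l4 = -(2*N-8)" using a k by simp
  have "l1*l2+l1*l3+l1*l4+l2*l3+l2*l4+l3*l4 = l1*l4 + l2*l3 + (l1+l4)*(l2+l3)" by (simp add: algebra_simps)
  also have "\<dots> = 2*k^2 - (sg1^2+sg2^2) + 4*k^2" using a by (simp add: power2_eq_square)
  finally show "l1*l2+l1*l3+l1*l4+l2*l3+l2*l4+l3*l4 = (N-4)^2 - 2*(N-2)"
    using S k by (simp add: power2_eq_square field_simps)
  have "l1*l2*l3+l1*l2*l4+l1*l3*l4+l2*l3*l4 = (l1*l4)*(l2+l3) + (l2*l3)*(l1+l4)" by (simp add: algebra_simps)
  also have "\<dots> = -2*k*(2*k^2 - (sg1^2+sg2^2))" by (simp only: a) (simp add: algebra_simps)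
  also have "\<dots> = -2*k*(k^2 - N^2/4)" using S by simp
  also have "\<dots> = 2*(N-2)*(N-4)" unfolding k power2_eq_square by (simp add: field_simps)
  finally show "l1*l2*l3+l1*l2*l4+l1*l3*l4+l2*l3*l4 = 2*(N-2)*(N-4)" .
  have "l1*l2*l3*l4 = (l1*l4)*(l2*l3)" by (simp add: algebra_simps)
  also have "\<dots> = k^2*k^2 - k^2*(sg1^2+sg2^2) + sg1^2* sg2^2" by (simp only: a) (simp add: algebra_simps)
  finally show "l1*l2*l3*l4 = -cc" using S P by (simp add: algebra_simps)
qed

lemma chain_alg:
  fixes N cc l1 l2 l3 l4 z p q ss ee :: real
  assumes "l1+l2+l3+l4 = -(2*N-8)"
    "l1*l2+l1*l3+l1*l4+l2*l3+l2*l4+l3*l4 = (N-4)^2 - 2*(N-2)"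
    "l1*l2*l3+l1*l2*l4+l1*l3*l4+l2*l3*l4 = 2*(N-2)*(N-4)"
    "l1*l2*l3*l4 = -cc"
  shows "(2-N-l4-l3)*((2-N)*((2-N)*p + q) + (2*q+ ss)) + 2*(2*q+ ss) + ((4-N)* ss + cc*(ee - 1))
           + l3*l4*((2-N)*p + q) - l2*((2*q+ ss) + (2-N-l4-l3)*((2-N)*p + q) + l3*l4*p)
         = l1 * ((2-N-l4-l3)*((2-N)*p + q) + (2*q + ss) + l3*l4*p - l2*(q + (2-N-l4-l3)*p + l3*l4*z))
           + cc*(ee - 1 - z)"
  using assms by algebra
lemma exp6: fixes x :: real assumes "x \<ge> 0" shows "x^6/46656 \<le> exp x - 1 - x"
proof -
  define y where "y = x/6"
  have y: "y \<ge> 0" using assms by (simp add: y_def)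
  have "1 + y \<le> exp y" by (rule exp_ge_add_one_self)
  then have "(1+y)^6 \<le> (exp y)^6" using y by (intro power_mono) auto
  also have "(exp y)^6 = exp x" by (simp add: y_def flip: exp_of_nat_mult)
  finally have e: "(1+y)^6 \<le> exp x" .
  have "(1+y)^6 = 1 + 6*y + 15*y^2 + 20*y^3 + 15*y^4 + 6*y^5 + y^6"
    by (simp add: eval_nat_numeral algebra_simps)
  moreover have "15*y^2 + 20*y^3 + 15*y^4 + 6*y^5 \<ge> 0" using y by simp
  ultimately have "1 + 6*y + y^6 \<le> exp x" using e by linarith
  moreover have "y^6 = x^6/46656" by (simp add: y_def power_divide)
  ultimately show ?thesis by (simp add: y_def)
qed

lemma lin_bound:
  fixes Z P Q S g :: "real \<Rightarrow> real" and A B c0 c1 c2 c3 :: real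
  assumes bZ: "\<And>t. t \<le> 0 \<Longrightarrow> \<bar>Z t\<bar> \<le> A + B * \<bar>t\<bar>"
    and bP: "\<And>t. t \<le> 0 \<Longrightarrow> \<bar>P t\<bar> \<le> A"
    and bQ: "\<And>t. t \<le> 0 \<Longrightarrow> \<bar>Q t\<bar> \<le> A"
    and bS: "\<And>t. t \<le> 0 \<Longrightarrow> \<bar>S t\<bar> \<le> A"
    and g: "\<And>t. g t = c0 * Z t + c1 * P t + c2 * Q t + c3 * S t" and B: "B \<ge> 0"
  shows "\<And>t. t \<le> 0 \<Longrightarrow> \<bar>g t\<bar> \<le> (\<bar>c0\<bar> * A + \<bar>c1\<bar> * A + \<bar>c2\<bar> * A + \<bar>c3\<bar> * A) + (\<bar>c0\<bar> * B) * \<bar>t\<bar>"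
    and "\<bar>c0\<bar> * B \<ge> 0"
proof -
  fix t :: real assume t: "t \<le> 0"
  have "\<bar>g t\<bar> \<le> \<bar>c0\<bar> * \<bar>Z t\<bar> + \<bar>c1\<bar> * \<bar>P t\<bar> + \<bar>c2\<bar> * \<bar>Q t\<bar> + \<bar>c3\<bar> * \<bar>S t\<bar>"
    unfolding g by (simp add: abs_mult[symmetric])
  also have "\<dots> \<le> \<bar>c0\<bar> * (A + B * \<bar>t\<bar>) + \<bar>c1\<bar> * A + \<bar>c2\<bar> * A + \<bar>c3\<bar> * A"
    using bZ[OF t] bP[OF t] bQ[OF t] bS[OF t]
    by (intro add_mono mult_left_mono) auto
  finally show "\<bar>g t\<bar> \<le> (\<bar>c0\<bar> * A + \<bar>c1\<bar> * A + \<bar>c2\<bar> * A + \<bar>c3\<bar> * A) + (\<bar>c0\<bar> * B) * \<bar>t\<bar>"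
    by (simp add: algebra_simps)
next
  show "\<bar>c0\<bar> * B \<ge> 0" using B by simp
qed

lemma roots_exist:
  fixes N C :: real
  assumes N: "N > 5" and C: "C > 0" "C \<le> N^2 * (N-4)^2 / 16"
  obtains l1 l2 l3 l4 where "l1 < 0" "l2 < 0" "l3 < 0" "l4 > 0"
    "l1+l2+l3+l4 = -(2*N-8)"
    "l1*l2+l1*l3+l1*l4+l2*l3+l2*l4+l3*l4 = (N-4)^2 - 2*(N-2)"
    "l1*l2*l3+l1*l2*l4+l1*l3*l4+l2*l3*l4 = 2*(N-2)*(N-4)"
    "l1*l2*l3*l4 = -C"
proof -
  define k a b where "k = (N-4)/2" and "a = k^2" and "b = N^2/4"
  have k: "k > 0" using N by (simp add: k_def)
  have ab: "a * b \<ge> C" using C by (simp add: a_def b_def k_def power_divide mult.commute)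
  have ba: "b - a > 0" using N by (simp add: a_def b_def k_def power2_eq_square field_simps)
  define D where "D = (a-b)^2 + 4*C"
  have D0: "D \<ge> 0" using C by (simp add: D_def)
  have sD: "sqrt D ^ 2 = D" using D0 by simp
  have sD1: "sqrt D > b - a"
  proof -
    have "(b-a)^2 < D" using C by (simp add: D_def power2_commute)
    then show ?thesis using ba by (simp add: real_less_rsqrt)
  qed
  have sD2: "sqrt D \<le> a + b"
  proof -
    have "D \<le> (a+b)^2" using ab by (simp add: D_def power2_eq_square algebra_simps)
    then have "sqrt D \<le> sqrt ((a+b)^2)" by (rule real_sqrt_le_mono)
    moreover have "a + b \<ge> 0" using ba by (simp add: a_def) (smt (verit) zero_le_power2)
    ultimately show ?thesis by simp
  qed
  define X1 X2 where "X1 = (a + b + sqrt D)/2" and "X2 = (a + b - sqrt D)/2"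
  have X2: "X2 \<ge> 0" "X2 < a" using sD1 sD2 by (auto simp: X2_def)
  have X1: "X1 > a" using sD1 ba by (simp add: X1_def)
  have a0: "a \<ge> 0" by (simp add: a_def)
  define sg1 sg2 where "sg1 = sqrt X1" and "sg2 = sqrt X2"
  have ska: "sqrt a = k" using k by (simp add: a_def)
  have sg1k: "sg1 > k" using X1 a0 ska unfolding sg1_def by (metis real_sqrt_less_mono)
  have sg2k: "sg2 < k" using X2 a0 ska unfolding sg2_def by (metis real_sqrt_less_mono)
  have sg20: "sg2 \<ge> 0" using X2 by (simp add: sg2_def)
  have sq1: "sg1^2 = X1" using X1 a0 by (simp add: sg1_def)
  have sq2: "sg2^2 = X2" using X2 by (simp add: sg2_def)
  have S: "sg1^2 + sg2^2 = k^2 + N^2/4" using sq1 sq2 by (simp add: X1_def X2_def a_def b_def)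
  have P: "sg1^2 * sg2^2 = k^2 * (N^2/4) - C"
  proof -
    have "sg1^2 * sg2^2 = X1 * X2" by (simp add: sq1 sq2)
    also have "\<dots> = ((a+b)^2 - (sqrt D)^2)/4"
      unfolding X1_def X2_def by (simp add: power2_eq_square field_simps)
    also have "\<dots> = a * b - C" unfolding sD by (simp add: D_def power2_eq_square field_simps)
    finally show ?thesis by (simp add: a_def b_def)
  qed
  define l4 l3 l2 l1 where "l4 = sg1 - k" and "l3 = sg2 - k" and "l2 = -k - sg2" and "l1 = -k - sg1"
  have v: "l1+l2+l3+l4 = -(2*N-8)"
    "l1*l2+l1*l3+l1*l4+l2*l3+l2*l4+l3*l4 = (N-4)^2 - 2*(N-2)"
    "l1*l2*l3+l1*l2*l4+l1*l3*l4+l2*l3*l4 = 2*(N-2)*(N-4)"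
    "l1*l2*l3*l4 = -C"
    using vieta[OF k_def S P l4_def l3_def l2_def l1_def] by auto
  show ?thesis
    by (rule that[OF _ _ _ _ v]) (use k sg1k sg2k sg20 in \<open>auto simp: l1_def l2_def l3_def l4_def\<close>)
qed

lemma lin_bound_ex:
  fixes Z P Q S g :: "real \<Rightarrow> real" and A B c0 c1 c2 c3 :: real
  assumes bZ: "\<And>t. t \<le> 0 \<Longrightarrow> \<bar>Z t\<bar> \<le> A + B * \<bar>t\<bar>"
    and bP: "\<And>t. t \<le> 0 \<Longrightarrow> \<bar>P t\<bar> \<le> A"
    and bQ: "\<And>t. t \<le> 0 \<Longrightarrow> \<bar>Q t\<bar> \<le> A"
    and bS: "\<And>t. t \<le> 0 \<Longrightarrow> \<bar>S t\<bar> \<le> A"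
    and g: "\<And>t. g t = c0 * Z t + c1 * P t + c2 * Q t + c3 * S t" and B: "B \<ge> 0"
  obtains A' B' where "B' \<ge> 0" "\<And>t. t \<le> 0 \<Longrightarrow> \<bar>g t\<bar> \<le> A' + B' * \<bar>t\<bar>"
  using lin_bound[OF bZ bP bQ bS g B] by blast

lemma ode_main:
  fixes Z P Q S :: "real \<Rightarrow> real" and N C A B t :: real
  assumes N: "N > 5" and C: "C > 0" "C \<le> N^2 * (N-4)^2 / 16"
    and dZ: "\<And>t. (Z has_real_derivative P t) (at t)"
    and dP: "\<And>t. (P has_real_derivative ((2-N) * P t + Q t)) (at t)"
    and dQ: "\<And>t. (Q has_real_derivative (2 * Q t + S t)) (at t)"
    and dS: "\<And>t. (S has_real_derivative ((4-N) * S t + C * (exp (Z t) - 1))) (at t)"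
    and bZ: "\<And>t. t \<le> 0 \<Longrightarrow> \<bar>Z t\<bar> \<le> A + B * \<bar>t\<bar>"
    and bP: "\<And>t. t \<le> 0 \<Longrightarrow> \<bar>P t\<bar> \<le> A"
    and bQ: "\<And>t. t \<le> 0 \<Longrightarrow> \<bar>Q t\<bar> \<le> A"
    and bS: "\<And>t. t \<le> 0 \<Longrightarrow> \<bar>S t\<bar> \<le> A"
    and B: "B \<ge> 0"
  shows "Z t \<le> 0"
proof -
  obtain l1 l2 l3 l4 where l: "l1 < 0" "l2 < 0" "l3 < 0" "l4 > 0"
    and v: "l1+l2+l3+l4 = -(2*N-8)"
    "l1*l2+l1*l3+l1*l4+l2*l3+l2*l4+l3*l4 = (N-4)^2 - 2*(N-2)"
    "l1*l2*l3+l1*l2*l4+l1*l3*l4+l2*l3*l4 = 2*(N-2)*(N-4)"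
    "l1*l2*l3*l4 = -C"
    using roots_exist[OF N C] by blast
  define c where "c = 2 - N - l4 - l3"
  define z1 where "z1 \<tau> = P \<tau> - l4 * Z \<tau>" for \<tau>
  define z2 where "z2 \<tau> = Q \<tau> + c * P \<tau> + l3 * l4 * Z \<tau>" for \<tau>
  define z3 where "z3 \<tau> = c * ((2-N) * P \<tau> + Q \<tau>) + (2 * Q \<tau> + S \<tau>) + l3 * l4 * P \<tau> - l2 * z2 \<tau>" for \<tau>
  define F where "F \<tau> = C * (exp (Z \<tau>) - 1 - Z \<tau>)" for \<tau>
  have dZ': "(Z has_real_derivative (l4 * Z \<tau> + z1 \<tau>)) (at \<tau>)" for \<tau>
    using dZ[of \<tau>] by (simp add: z1_def)
  have dz1: "(z1 has_real_derivative (l3 * z1 \<tau> + z2 \<tau>)) (at \<tau>)" for \<tau>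
    unfolding z1_def
    by (rule derivative_eq_intros dZ dP refl)+ (simp add: z2_def c_def algebra_simps)
  have dz2: "(z2 has_real_derivative (l2 * z2 \<tau> + z3 \<tau>)) (at \<tau>)" for \<tau>
    unfolding z2_def
    by (rule derivative_eq_intros dZ dP dQ refl)+ (simp add: z3_def z2_def c_def algebra_simps)
  have dz3: "(z3 has_real_derivative (l1 * z3 \<tau> + F \<tau>)) (at \<tau>)" for \<tau>
    unfolding z3_def z2_def
    apply (rule derivative_eq_intros dZ dP dQ dS refl)+
    using chain_alg[OF v, where p="P \<tau>" and q="Q \<tau>" and ss="S \<tau>" and ee="exp (Z \<tau>)" and z="Z \<tau>"]
    unfolding c_def F_def by (simp add: algebra_simps)
  have F0: "F \<tau> \<ge> 0" for \<tau>
  proof -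
    have "1 + Z \<tau> \<le> exp (Z \<tau>)" by (rule exp_ge_add_one_self)
    then have "exp (Z \<tau>) - 1 - Z \<tau> \<ge> 0" by linarith
    then show ?thesis using C(1) unfolding F_def by simp
  qed
  have e3: "\<And>\<tau>. z3 \<tau> = (- l2 * l3 * l4) * Z \<tau> + (c * (2-N) + l3 * l4 - l2 * c) * P \<tau> + (c + 2 - l2) * Q \<tau> + 1 * S \<tau>"
    by (simp add: z3_def z2_def algebra_simps)
  obtain A3 B3 where B3: "B3 \<ge> 0" and bz3: "\<And>\<tau>. \<tau> \<le> 0 \<Longrightarrow> \<bar>z3 \<tau>\<bar> \<le> A3 + B3 * \<bar>\<tau>\<bar>"
    by (rule lin_bound_ex[OF bZ bP bQ bS e3 B]) auto
  have z3: "z3 \<tau> \<ge> 0" for \<tau>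
    by (rule stepA[OF l(1) dz3 F0 bz3 B3])
  have e2: "\<And>\<tau>. z2 \<tau> = (l3 * l4) * Z \<tau> + c * P \<tau> + 1 * Q \<tau> + 0 * S \<tau>"
    by (simp add: z2_def algebra_simps)
  obtain A2 B2 where B2: "B2 \<ge> 0" and bz2: "\<And>\<tau>. \<tau> \<le> 0 \<Longrightarrow> \<bar>z2 \<tau>\<bar> \<le> A2 + B2 * \<bar>\<tau>\<bar>"
    by (rule lin_bound_ex[OF bZ bP bQ bS e2 B]) auto
  have z2: "z2 \<tau> \<ge> 0" for \<tau>
    by (rule stepA[OF l(2) dz2 z3 bz2 B2])
  have e1: "\<And>\<tau>. z1 \<tau> = (- l4) * Z \<tau> + 1 * P \<tau> + 0 * Q \<tau> + 0 * S \<tau>"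
    by (simp add: z1_def algebra_simps)
  obtain A1 B1 where B1: "B1 \<ge> 0" and bz1: "\<And>\<tau>. \<tau> \<le> 0 \<Longrightarrow> \<bar>z1 \<tau>\<bar> \<le> A1 + B1 * \<bar>\<tau>\<bar>"
    by (rule lin_bound_ex[OF bZ bP bQ bS e1 B]) auto
  have z1: "z1 \<tau> \<ge> 0" for \<tau>
    by (rule stepA[OF l(3) dz1 z2 bz1 B1])
  show ?thesis
  proof (rule ccontr)
    assume "\<not> Z t \<le> 0"
    then have Zt: "Z t > 0" by simp
    have grow_exp: "Z \<tau> \<ge> exp (l4 * (\<tau> - t)) * Z t" if "t \<le> \<tau>" for \<tau>
    proof -
      have "exp (-l4*t) * Z t \<le> exp (-l4*\<tau>) * Z \<tau>"
        by (rule exp_weight_mono[OF dZ']) (use z1 that in auto)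
      then have "exp (l4*\<tau>) * (exp (-l4*t) * Z t) \<le> exp (l4*\<tau>) * (exp (-l4*\<tau>) * Z \<tau>)"
        by (intro mult_left_mono) auto
      moreover have "exp (l4*\<tau>) * (exp (-l4*\<tau>) * Z \<tau>) = Z \<tau>"
        by (simp add: mult.assoc[symmetric] flip: exp_add)
      moreover have "exp (l4*\<tau>) * (exp (-l4*t) * Z t) = exp (l4 * (\<tau> - t)) * Z t"
        by (simp add: mult.assoc[symmetric] right_diff_distrib flip: exp_add)
      ultimately show ?thesis by linarith
    qed
    have Zpos: "Z \<tau> > 0" if "t \<le> \<tau>" for \<tau>
      using grow_exp[OF that] Zt by (smt (verit) exp_gt_zero mult_pos_pos)
    have Zmono: "Z a \<le> Z b" if "t \<le> a" "a \<le> b" for a b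
    proof (rule DERIV_nonneg_imp_nondecreasing[OF that(2)])
      fix x assume "a \<le> x" "x \<le> b"
      then have "Z x > 0" using Zpos that by auto
      then show "\<exists>y. (Z has_real_derivative y) (at x) \<and> 0 \<le> y"
        using dZ'[of x] z1[of x] l(4) by (intro exI[of _ "l4 * Z x + z1 x"]) auto
    qed
    define K where "K = exp l1 * exp l2 * exp l3 * C / (46656 * 24)"
    have K: "K > 0" using C by (simp add: K_def)
    have grow: "Z \<tau> \<ge> Z s + K * (\<tau> - s)^4 * Z s ^ 6" if s: "t \<le> s" "s \<le> \<tau>" "\<tau> \<le> s + 1" for s \<tau>
    proof -
      define G where "G = C * Z s ^ 6 / 46656"
      have Zs: "Z s > 0" using Zpos s by auto
      have G0: "G \<ge> 0" using C Zs by (simp add: G_def)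
      have FG: "F x \<ge> G * (x - s)^0" if "s \<le> x" "x \<le> s + 1" for x
      proof -
        have Zx: "Z s \<le> Z x" using Zmono s that by auto
        have "Z s ^ 6 \<le> Z x ^ 6" using Zx Zs by (intro power_mono) auto
        also have "Z x ^ 6 / 46656 * 46656 \<le> (exp (Z x) - 1 - Z x) * 46656"
          using exp6[of "Z x"] Zx Zs by simp
        finally have "Z s ^ 6 \<le> (exp (Z x) - 1 - Z x) * 46656" by simp
        then have "C * Z s ^ 6 \<le> C * ((exp (Z x) - 1 - Z x) * 46656)"
          using C by (intro mult_left_mono) auto
        then show ?thesis by (simp add: F_def G_def algebra_simps)
      qed
      have h3: "z3 x \<ge> (exp l1 * G) * (x - s)^1" if "s \<le> x" "x \<le> s + 1" for x
        using stepB_aux[OF l(1) dz3 z3 G0 FG that] by simp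
      have c1: "exp l1 * G \<ge> 0" using G0 by simp
      have h2: "z2 x \<ge> (exp l2 * exp l1 * G / 2) * (x - s)^2" if "s \<le> x" "x \<le> s + 1" for x
        using stepB_aux[OF l(2) dz2 z2 c1 h3 that] by (simp add: eval_nat_numeral)
      have c2: "exp l2 * exp l1 * G / 2 \<ge> 0" using G0 by simp
      have h1: "z1 x \<ge> (exp l3 * exp l2 * exp l1 * G / 6) * (x - s)^3" if "s \<le> x" "x \<le> s + 1" for x
        using stepB_aux[OF l(3) dz1 z1 c2 h2 that] by (simp add: eval_nat_numeral)
      define c3 where "c3 = exp l3 * exp l2 * exp l1 * G / 6"
      have "Z s + (c3/4) * (\<tau> - s)^4 \<le> Z \<tau>"
      proof (rule deriv_cmp[OF s(2)])
        fix x assume x: "s \<le> x" "x \<le> \<tau>"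
        show "(Z has_real_derivative (l4 * Z x + z1 x)) (at x)" by (rule dZ')
        show "((\<lambda>x. Z s + (c3/4) * (x - s)^4) has_real_derivative c3 * (x - s)^3) (at x)"
          by (rule derivative_eq_intros refl)+ (simp add: eval_nat_numeral)
        have "Z x > 0" using Zpos s x by auto
        then have "l4 * Z x \<ge> 0" using l(4) by simp
        moreover have "z1 x \<ge> c3 * (x - s)^3" using h1[of x] x s by (simp add: c3_def)
        ultimately show "c3 * (x - s)^3 \<le> l4 * Z x + z1 x" by linarith
      qed simp
      moreover have "c3/4 = K * Z s ^ 6" by (simp add: c3_def G_def K_def)
      ultimately show ?thesis by (simp add: mult.assoc mult.commute[of "Z s ^ 6"])
    qed
    define t0 where "t0 = t + (1 + 1/K)/(Z t * l4)"
    have tt0: "t \<le> t0" using Zt l(4) K by (simp add: t0_def)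
    have "Z t0 \<ge> exp (l4 * (t0 - t)) * Z t" by (rule grow_exp[OF tt0])
    moreover have "exp (l4 * (t0 - t)) \<ge> 1 + l4 * (t0 - t)" by (rule exp_ge_add_one_self)
    ultimately have "Z t0 \<ge> (1 + l4 * (t0 - t)) * Z t" using Zt by (smt (verit) mult_right_mono)
    also have "(1 + l4 * (t0 - t)) * Z t = Z t + (1 + 1/K)" using Zt l(4) by (simp add: t0_def field_simps)
    finally have Zt0: "Z t0 \<ge> 1 + 1/K" using Zt by linarith
    show False
    proof (rule blowup[where z=Z and K=K and Zi="Z t0" and ti=t0])
      show "K > 0" by (rule K)
      show "Z t0 \<le> Z t0" by simp
      show "1 \<le> Z t0" using Zt0 K by (smt (verit) divide_pos_pos)
      show "1 + 1/K \<le> Z t0" by (rule Zt0)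
      show "\<And>s u. t0 \<le> s \<Longrightarrow> s \<le> u \<Longrightarrow> Z s \<le> Z u" using Zmono tt0 by auto
      show "\<And>s u. t0 \<le> s \<Longrightarrow> s \<le> u \<Longrightarrow> u \<le> s + 1 \<Longrightarrow> Z s + K * (u - s)^4 * Z s ^ 6 \<le> Z u"
        using grow tt0 by auto
    qed
  qed
qed

lemma int_deriv:
  fixes g :: "real \<Rightarrow> real"
  assumes "continuous_on {0..} g" "s > 0"
  shows "((\<lambda>x. integral {0..x} g) has_real_derivative g s) (at s)"
proof -
  have c: "continuous_on {0..s+1} g" using assms(1) by (rule continuous_on_subset) auto
  have "((\<lambda>x. integral {0..x} g) has_real_derivative g s) (at s within {0..s+1})"
    using integral_has_real_derivative[OF c, of s] assms(2) by simp
  moreover have "at s within {0..s+1} = at s"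
    using at_within_interior[of s "{0..s+1}"] assms(2) by simp
  ultimately show ?thesis by simp
qed

lemma hasint_deriv:
  fixes f F :: "real \<Rightarrow> real"
  assumes hF: "\<And>r. r \<ge> 0 \<Longrightarrow> (f has_integral F r) {0..r}" and r: "r > 0"
    and fc: "continuous (at r) f"
  shows "(F has_real_derivative f r) (at r)"
proof -
  define b where "b = r + 1"
  have int: "f integrable_on {0..b}" using hF[of b] r by (auto simp: b_def)
  have "((\<lambda>y. integral {0..y} f) has_vector_derivative f r) (at r within ({0..b} - {}))"
    by (rule integral_has_vector_derivative_continuous_at[OF int])
       (use r fc in \<open>auto simp: b_def continuous_at_imp_continuous_at_within\<close>)
  moreover have "at r within ({0..b} - {}) = at r"
    using at_within_interior[of r "{0..b}"] r by (simp add: b_def)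
  ultimately have "((\<lambda>y. integral {0..y} f) has_vector_derivative f r) (at r)" by simp
  then have d: "((\<lambda>y. integral {0..y} f) has_real_derivative f r) (at r)"
    by (simp add: has_real_derivative_iff_has_vector_derivative)
  have eq: "integral {0..x} f = F x" if "x \<in> {0<..}" for x
    using hF[of x] that by (intro integral_unique) auto
  show ?thesis
    by (rule has_field_derivative_transform_within_open[OF d, of "{0<..}"]) (use r eq in auto)
qed

lemma exp_powr: "(exp (t::real)) powr a = exp (a * t)"
  by (simp add: powr_def)

lemma cont_powr_mult:
  fixes I :: "real \<Rightarrow> real"
  assumes "r > 0" "(I has_real_derivative D) (at r)"
  shows "continuous (at r) (\<lambda>x. x powr a * I x)"
proof -
  have "isCont I r" using assms(2) by (rule DERIV_isCont)
  moreover have "isCont (\<lambda>x. x powr a) r" using assms(1) by (auto intro!: continuous_intros)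
  ultimately show ?thesis by (auto intro!: continuous_intros)
qed

lemma exp_comb:
  fixes a b c d X :: real
  assumes "a + b + c = d"
  shows "exp a * (exp b * X * exp c) = exp d * X"
proof -
  have "exp a * (exp b * X * exp c) = (exp a * exp b * exp c) * X" by (simp add: ac_simps)
  also have "exp a * exp b * exp c = exp d" using assms by (simp flip: exp_add)
  finally show ?thesis .
qed

lemma radial_ode:
  fixes n :: nat and \<alpha> \<beta> C :: real and u :: "real \<Rightarrow> real"
  assumes sol: "global_radial_sol n \<alpha> \<beta> u" and \<alpha>: "\<alpha> > -2" and n: "real n > 4"
    and Cdef: "C = 2 * (4+\<alpha>) * (real n - 2) * (real n - 4)"
  obtains Z P Q S :: "real \<Rightarrow> real" and A B :: real where
    "\<And>t. (Z has_real_derivative P t) (at t)"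
    "\<And>t. (P has_real_derivative ((2 - real n) * P t + Q t)) (at t)"
    "\<And>t. (Q has_real_derivative (2 * Q t + S t)) (at t)"
    "\<And>t. (S has_real_derivative ((4 - real n) * S t + C * (exp (Z t) - 1))) (at t)"
    "\<And>t. t \<le> 0 \<Longrightarrow> \<bar>Z t\<bar> \<le> A + B * \<bar>t\<bar>"
    "\<And>t. t \<le> 0 \<Longrightarrow> \<bar>P t\<bar> \<le> A"
    "\<And>t. t \<le> 0 \<Longrightarrow> \<bar>Q t\<bar> \<le> A"
    "\<And>t. t \<le> 0 \<Longrightarrow> \<bar>S t\<bar> \<le> A"
    "B \<ge> 0"
    "\<And>r. r > 0 \<Longrightarrow> Z (ln r) = u r + (4 + \<alpha>) * ln r - ln C"
proof -
  define N where "N = real n"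
  obtain w where uc: "continuous_on {0..} u" and wc: "continuous_on {0..} w"
    and hw: "\<And>r. r \<ge> 0 \<Longrightarrow> ((\<lambda>s. s powr (1 - N) *
                    integral {0..s} (\<lambda>t. t powr (N - 1 + \<alpha>) * exp (u t)))
                 has_integral (w r - \<beta>)) {0..r}"
    and hu: "\<And>r. r \<ge> 0 \<Longrightarrow> ((\<lambda>s. s powr (1 - N) *
                    integral {0..s} (\<lambda>t. t powr (N - 1) * w t))
                 has_integral (u r)) {0..r}"
    using sol unfolding global_radial_sol_def N_def by blast
  define g1 where "g1 = (\<lambda>t. t powr (N - 1) * w t)"
  define g2 where "g2 = (\<lambda>t. t powr (N - 1 + \<alpha>) * exp (u t))"
  define I1 where "I1 x = integral {0..x} g1" for x
  define I2 where "I2 x = integral {0..x} g2" for x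
  have N4: "N > 4" using n by (simp add: N_def)
  have g1c: "continuous_on {0..} g1"
    unfolding g1_def using N4
    by (intro continuous_intros continuous_on_powr' wc) auto
  have g2c: "continuous_on {0..} g2"
    unfolding g2_def using N4 \<alpha>
    by (intro continuous_intros continuous_on_powr' continuous_on_compose2[OF continuous_on_exp uc]) auto
  have dI1: "(I1 has_real_derivative g1 r) (at r)" if "r > 0" for r
    unfolding I1_def by (rule int_deriv[OF g1c that])
  have dI2: "(I2 has_real_derivative g2 r) (at r)" if "r > 0" for r
    unfolding I2_def by (rule int_deriv[OF g2c that])
  have du: "(u has_real_derivative r powr (1 - N) * I1 r) (at r)" if "r > 0" for r
  proof (rule hasint_deriv[where f = "\<lambda>s. s powr (1 - N) * I1 s"])
    show "((\<lambda>s. s powr (1 - N) * I1 s) has_integral u x) {0..x}" if "x \<ge> 0" for x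
      using hu[OF that] by (simp add: I1_def g1_def)
    show "continuous (at r) (\<lambda>s. s powr (1 - N) * I1 s)" by (rule cont_powr_mult[OF that dI1[OF that]])
  qed (rule that)
  have dw: "(w has_real_derivative r powr (1 - N) * I2 r) (at r)" if "r > 0" for r
  proof -
    have "((\<lambda>x. w x - \<beta>) has_real_derivative r powr (1 - N) * I2 r) (at r)"
    proof (rule hasint_deriv[where f = "\<lambda>s. s powr (1 - N) * I2 s"])
      show "((\<lambda>s. s powr (1 - N) * I2 s) has_integral w x - \<beta>) {0..x}" if "x \<ge> 0" for x
        using hw[OF that] by (simp add: I2_def g2_def)
      show "continuous (at r) (\<lambda>s. s powr (1 - N) * I2 s)" by (rule cont_powr_mult[OF that dI2[OF that]])
    qed (rule that)
    then have "((\<lambda>x. (w x - \<beta>) + \<beta>) has_real_derivative r powr (1 - N) * I2 r + 0) (at r)"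
      by (intro derivative_intros)
    then show ?thesis by simp
  qed
  have C0: "C > 0" using \<alpha> N4 by (simp add: Cdef N_def[symmetric])
  define ue where "ue = (\<lambda>t. u (exp t))"
  define we where "we = (\<lambda>t. w (exp t))"
  define I1e where "I1e = (\<lambda>t. I1 (exp t))"
  define I2e where "I2e = (\<lambda>t. I2 (exp t))"
  have due: "(ue has_real_derivative exp ((2-N)*t) * I1e t) (at t)" for t
  proof -
    have "(ue has_real_derivative (exp t powr (1 - N) * I1 (exp t)) * exp t) (at t)"
      unfolding ue_def by (rule DERIV_chain2[OF du]) (auto intro: DERIV_exp)
    moreover have "(exp t powr (1 - N) * I1 (exp t)) * exp t = exp ((2-N)*t) * I1e t"
      using exp_comb[of 0 "(1-N)*t" t "(2-N)*t" "I1 (exp t)"]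
      by (simp add: exp_powr I1e_def algebra_simps)
    ultimately show ?thesis by simp
  qed
  have dI1e: "(I1e has_real_derivative exp ((N-1)*t) * we t * exp t) (at t)" for t
  proof -
    have "(I1e has_real_derivative g1 (exp t) * exp t) (at t)"
      unfolding I1e_def by (rule DERIV_chain2[OF dI1]) (auto intro: DERIV_exp)
    then show ?thesis by (simp add: g1_def exp_powr we_def)
  qed
  have dI2e: "(I2e has_real_derivative exp ((N-1+\<alpha>)*t) * exp (ue t) * exp t) (at t)" for t
  proof -
    have "(I2e has_real_derivative g2 (exp t) * exp t) (at t)"
      unfolding I2e_def by (rule DERIV_chain2[OF dI2]) (auto intro: DERIV_exp)
    then show ?thesis by (simp add: g2_def exp_powr ue_def)
  qed
  have dwe: "(we has_real_derivative exp ((1-N)*t) * I2e t * exp t) (at t)" for t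
  proof -
    have "(we has_real_derivative (exp t powr (1 - N) * I2 (exp t)) * exp t) (at t)"
      unfolding we_def by (rule DERIV_chain2[OF dw]) (auto intro: DERIV_exp)
    then show ?thesis by (simp add: exp_powr I2e_def)
  qed
  define Z where "Z t = ue t + (4+\<alpha>) * t - ln C" for t
  define P where "P t = exp ((2-N)*t) * I1e t + (4+\<alpha>)" for t
  define Q where "Q t = exp (2*t) * we t + (N-2)*(4+\<alpha>)" for t
  define S where "S t = exp ((4-N)*t) * I2e t - 2*(N-2)*(4+\<alpha>)" for t
  have dZ: "(Z has_real_derivative P t) (at t)" for t
    unfolding Z_def[abs_def] P_def
    by (rule derivative_eq_intros due refl)+ simp
  have dP: "(P has_real_derivative ((2 - N) * P t + Q t)) (at t)" for t
  proof -
    have e0: "exp ((2-N)*t) * (exp ((N-1)*t) * we t * exp t) = exp (2*t) * we t"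
      by (rule exp_comb) (simp add: algebra_simps)
    have e: "exp ((N-1)*t) * we t * exp t * exp ((2-N)*t) = exp (2*t) * we t"
      using e0 by (metis mult.commute)
    show ?thesis
      unfolding P_def[abs_def]
      by (rule derivative_eq_intros dI1e refl)+ (simp only: e, simp add: Q_def algebra_simps)
  qed
  have dQ: "(Q has_real_derivative (2 * Q t + S t)) (at t)" for t
  proof -
    have e0: "exp (2*t) * (exp ((1-N)*t) * I2e t * exp t) = exp ((4-N)*t) * I2e t"
      by (rule exp_comb) (simp add: algebra_simps)
    have e: "exp ((1-N)*t) * I2e t * exp t * exp (2*t) = exp ((4-N)*t) * I2e t"
      using e0 by (metis mult.commute)
    show ?thesis
      unfolding Q_def[abs_def]
      by (rule derivative_eq_intros dwe refl)+ (simp only: e, simp add: S_def algebra_simps)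
  qed
  have Cn: "C = 2*(4+\<alpha>)*(N-2)*(N-4)" by (simp add: Cdef N_def)
  have eZ: "C * exp (Z t) = exp ((4+\<alpha>)*t) * exp (ue t)" for t
    using C0 by (simp add: Z_def exp_diff exp_add algebra_simps)
  have dS: "(S has_real_derivative ((4 - N) * S t + C * (exp (Z t) - 1))) (at t)" for t
  proof -
    have e0: "exp ((4-N)*t) * (exp ((N-1+\<alpha>)*t) * exp (ue t) * exp t) = exp ((4+\<alpha>)*t) * exp (ue t)"
      by (rule exp_comb) (simp add: algebra_simps)
    have e: "exp ((N-1+\<alpha>)*t) * exp (ue t) * exp t * exp ((4-N)*t) = exp ((4+\<alpha>)*t) * exp (ue t)"
      using e0 by (metis mult.commute)
    have r: "(4 - N) * S t + C * (exp (Z t) - 1) = (4 - N) * S t + C * exp (Z t) - C"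
      by (simp add: algebra_simps)
    have "(S has_real_derivative ((4-N) * S t + exp ((4+\<alpha>)*t) * exp (ue t) - C)) (at t)"
      unfolding S_def[abs_def]
      by (rule derivative_eq_intros dI2e refl)+ (simp only: e, simp add: Cn algebra_simps)
    then show ?thesis unfolding r eZ .
  qed
  obtain Mu where Mu0: "Mu \<ge> 0" and Mu: "\<And>x. x \<in> {0..1} \<Longrightarrow> norm (u x) \<le> Mu"
    using continuous_on_compact_bound[of "{0..1}" u] continuous_on_subset[OF uc, of "{0..1}"] by auto
  obtain Mw where Mw0: "Mw \<ge> 0" and Mw: "\<And>x. x \<in> {0..1} \<Longrightarrow> norm (w x) \<le> Mw"
    using continuous_on_compact_bound[of "{0..1}" w] continuous_on_subset[OF wc, of "{0..1}"] by auto
  have bI1: "\<bar>I1 r\<bar> \<le> r powr (N-1) * Mw * r" if r: "0 \<le> r" "r \<le> 1" for r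
  proof -
    have "norm (integral {0..r} g1) \<le> (r powr (N-1) * Mw) * (r - 0)"
    proof (rule integral_bound[OF r(1)])
      show "continuous_on {0..r} g1" using g1c by (rule continuous_on_subset) auto
      fix x assume x: "x \<in> {0..r}"
      have "x powr (N-1) \<le> r powr (N-1)" using x N4 by (intro powr_mono2) auto
      moreover have "\<bar>w x\<bar> \<le> Mw" using Mw[of x] x r by auto
      ultimately have "x powr (N-1) * \<bar>w x\<bar> \<le> r powr (N-1) * Mw"
        by (intro mult_mono) auto
      then show "norm (g1 x) \<le> r powr (N-1) * Mw" by (simp add: g1_def abs_mult)
    qed
    then show ?thesis by (simp add: I1_def)
  qed
  have bI2: "\<bar>I2 r\<bar> \<le> r powr (N-1+\<alpha>) * exp Mu * r" if r: "0 \<le> r" "r \<le> 1" for r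
  proof -
    have "norm (integral {0..r} g2) \<le> (r powr (N-1+\<alpha>) * exp Mu) * (r - 0)"
    proof (rule integral_bound[OF r(1)])
      show "continuous_on {0..r} g2" using g2c by (rule continuous_on_subset) auto
      fix x assume x: "x \<in> {0..r}"
      have "x powr (N-1+\<alpha>) \<le> r powr (N-1+\<alpha>)" using x N4 \<alpha> by (intro powr_mono2) auto
      moreover have "exp (u x) \<le> exp Mu" using Mu[of x] x r by auto
      ultimately have "x powr (N-1+\<alpha>) * exp (u x) \<le> r powr (N-1+\<alpha>) * exp Mu"
        by (intro mult_mono) auto
      then show "norm (g2 x) \<le> r powr (N-1+\<alpha>) * exp Mu" by (simp add: g2_def abs_mult)
    qed
    then show ?thesis by (simp add: I2_def)
  qed
  define A where "A = Mu + Mw + exp Mu + \<bar>ln C\<bar> + 3*((N-2)*(4+\<alpha>)) + (4+\<alpha>)"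
  define B where "B = 4 + \<alpha>"
  have pos: "(N-2)*(4+\<alpha>) \<ge> 0" "4 + \<alpha> \<ge> 0" using N4 \<alpha> by auto
  have bZ: "\<bar>Z t\<bar> \<le> A + B * \<bar>t\<bar>" if "t \<le> 0" for t
  proof -
    have "\<bar>ue t\<bar> \<le> Mu" using Mu[of "exp t"] that by (simp add: ue_def)
    moreover have "\<bar>(4+\<alpha>) * t\<bar> = (4+\<alpha>) * \<bar>t\<bar>" using pos by (simp add: abs_mult)
    ultimately have "\<bar>Z t\<bar> \<le> Mu + (4+\<alpha>) * \<bar>t\<bar> + \<bar>ln C\<bar>"
      unfolding Z_def by (smt (verit))
    then show ?thesis using pos Mw0 exp_gt_zero[of Mu] unfolding A_def B_def by linarith
  qed
  have bP: "\<bar>P t\<bar> \<le> A" if "t \<le> 0" for t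
  proof -
    have r: "0 \<le> exp t" "exp t \<le> 1" using that by auto
    have "\<bar>exp ((2-N)*t) * I1e t\<bar> \<le> exp ((2-N)*t) * (exp t powr (N-1) * Mw * exp t)"
      using bI1[OF r] by (simp add: I1e_def abs_mult mult_left_mono)
    also have "\<dots> = exp (2*t) * Mw"
      using exp_comb[of "(2-N)*t" "(N-1)*t" t "2*t" Mw] by (simp add: exp_powr algebra_simps)
    also have "\<dots> \<le> 1 * Mw" using that Mw0 by (intro mult_right_mono) auto
    finally have "\<bar>exp ((2-N)*t) * I1e t\<bar> \<le> Mw" by simp
    then show ?thesis unfolding P_def using pos Mu0 exp_gt_zero[of Mu] unfolding A_def by (smt (verit))
  qed
  have bQ: "\<bar>Q t\<bar> \<le> A" if "t \<le> 0" for t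
  proof -
    have "\<bar>we t\<bar> \<le> Mw" using Mw[of "exp t"] that by (simp add: we_def)
    then have "\<bar>exp (2*t) * we t\<bar> \<le> 1 * Mw" unfolding abs_mult using that
      by (intro mult_mono) auto
    then show ?thesis unfolding Q_def using pos Mu0 exp_gt_zero[of Mu] unfolding A_def by (smt (verit))
  qed
  have bS: "\<bar>S t\<bar> \<le> A" if "t \<le> 0" for t
  proof -
    have r: "0 \<le> exp t" "exp t \<le> 1" using that by auto
    have "\<bar>exp ((4-N)*t) * I2e t\<bar> \<le> exp ((4-N)*t) * (exp t powr (N-1+\<alpha>) * exp Mu * exp t)"
      using bI2[OF r] by (simp add: I2e_def abs_mult mult_left_mono)
    also have "\<dots> = exp ((4+\<alpha>)*t) * exp Mu"
      using exp_comb[of "(4-N)*t" "(N-1+\<alpha>)*t" t "(4+\<alpha>)*t" "exp Mu"] by (simp add: exp_powr algebra_simps)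
    also have "\<dots> \<le> 1 * exp Mu" using that pos by (intro mult_right_mono) (auto simp: mult_nonneg_nonpos)
    finally have "\<bar>exp ((4-N)*t) * I2e t\<bar> \<le> exp Mu" by simp
    moreover have "2*(N-2)*(4+\<alpha>) = 2*((N-2)*(4+\<alpha>))" by simp
    ultimately show ?thesis unfolding S_def using pos Mu0 Mw0 unfolding A_def by (smt (verit))
  qed
  show ?thesis
  proof (rule that[of Z P Q S A B])
    show "\<And>t. (Z has_real_derivative P t) (at t)" by (rule dZ)
    show "\<And>t. (P has_real_derivative ((2 - real n) * P t + Q t)) (at t)" using dP by (simp add: N_def)
    show "\<And>t. (Q has_real_derivative (2 * Q t + S t)) (at t)" by (rule dQ)
    show "\<And>t. (S has_real_derivative ((4 - real n) * S t + C * (exp (Z t) - 1))) (at t)"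
      using dS by (simp add: N_def)
    show "B \<ge> 0" using pos by (simp add: B_def)
    show "\<And>r. r > 0 \<Longrightarrow> Z (ln r) = u r + (4 + \<alpha>) * ln r - ln C" by (simp add: Z_def ue_def)
  qed (use bZ bP bQ bS in auto)
qed

definition gN :: "real \<Rightarrow> real \<Rightarrow> real" where
  "gN \<alpha> M = M^2 * (M - 4) / 16 - 2 * (4 + \<alpha>) * (M - 2)"

lemma gN_diff: "gN \<alpha> N - gN \<alpha> m = (N - m) * ((N^2 + N*m + m^2 - 4*(N+m))/16 - 2*(4+\<alpha>))"
  unfolding gN_def power2_eq_square by (simp add: field_simps)

lemma gN_P: assumes "M > 5"
  shows "(M^2 * (M - 4)^2 / 16 = 2 * (4 + \<alpha>) * (M - 2) * (M - 4)) \<longleftrightarrow> gN \<alpha> M = 0"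
proof -
  have "M^2 * (M - 4)^2 / 16 - 2 * (4 + \<alpha>) * (M - 2) * (M - 4) = (M - 4) * gN \<alpha> M"
    unfolding gN_def by (simp add: power2_eq_square algebra_simps)
  moreover have "M - 4 \<noteq> 0" using assms by simp
  ultimately show ?thesis by (metis eq_iff_diff_eq_0 mult_eq_0_iff)
qed

lemma gN_5: assumes "\<alpha> > -2" shows "gN \<alpha> 5 < 0"
  using assms unfolding gN_def by (simp add: power2_eq_square)

lemma bracket_pos:
  assumes a: "\<alpha> > -2" and m: "m > 5" and gm: "gN \<alpha> m = 0" and N: "N \<ge> m"
  shows "(N^2 + N*m + m^2 - 4*(N+m))/16 - 2*(4+\<alpha>) > 0"
proof -
  have "gN \<alpha> m - gN \<alpha> 5 > 0" using gN_5[OF a] gm by simp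
  then have "(m - 5) * ((m^2 + m*5 + 5^2 - 4*(m+5))/16 - 2*(4+\<alpha>)) > 0" by (simp only: gN_diff)
  then have b5: "(m^2 + m*5 + 5^2 - 4*(m+5))/16 - 2*(4+\<alpha>) > 0" using m
    by (simp add: zero_less_mult_iff)
  have "(N - m) * (N + 2*m - 4) \<ge> 0" using N m by simp
  then have "N^2 + N*m + m^2 - 4*(N+m) \<ge> 3*m^2 - 4*m - 4*m"
    by (simp add: power2_eq_square algebra_simps)
  moreover have "(2*m + 1) * (m - 5) > 0" using m by simp
  then have "3*m^2 - 4*m - 4*m > m^2 + m*5 + 5^2 - 4*(m+5)"
    by (simp add: power2_eq_square algebra_simps)
  ultimately show ?thesis using b5 by (smt (verit) divide_right_mono)
qed

lemma gN_exists: assumes a: "\<alpha> > -2" shows "\<exists>m>5. gN \<alpha> m = 0"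
proof -
  define a4 where "a4 = 4 + \<alpha>"
  have a4: "a4 > 2" using a by (simp add: a4_def)
  define M1 where "M1 = 8 + 64 * a4"
  have M1: "M1 \<ge> 8" "M1 - 4 \<ge> 64 * a4" "M1 \<ge> 1" using a4 by (auto simp: M1_def)
  have "M1^2 * (M1 - 4) / 16 \<ge> M1^2 * (64 * a4) / 16"
    using M1 by (intro divide_right_mono mult_left_mono) auto
  moreover have "M1^2 \<ge> M1" using M1 by (simp add: power2_eq_square)
  then have "M1^2 * (64 * a4) / 16 \<ge> M1 * (64 * a4) / 16"
    using a4 by (intro divide_right_mono mult_right_mono) auto
  moreover have "M1 * (64 * a4) / 16 \<ge> 2 * a4 * (M1 - 2)" using a4 M1
    by (simp add: algebra_simps)
  ultimately have g1: "gN \<alpha> M1 \<ge> 0" unfolding gN_def a4_def by linarith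
  have "\<exists>x. 5 \<le> x \<and> x \<le> M1 \<and> gN \<alpha> x = 0"
    by (rule IVT') (use gN_5[OF a] g1 M1 in \<open>auto simp: gN_def intro!: continuous_intros\<close>)
  then obtain x where x: "5 \<le> x" "gN \<alpha> x = 0" by blast
  then have "x \<noteq> 5" using gN_5[OF a] by auto
  then show ?thesis using x by (intro exI[of _ x]) auto
qed

lemma N_alpha_prop:
  fixes \<alpha> N :: real
  assumes a: "\<alpha> > -2" and N: "N \<ge> N_alpha \<alpha>"
  shows "N > 5" "2*(4+\<alpha>)*(N-2)*(N-4) \<le> N^2*(N-4)^2/16"
proof -
  obtain m where m: "m > 5" "gN \<alpha> m = 0" using gN_exists[OF a] by blast
  have uniq: "M = m" if "M > 5" "gN \<alpha> M = 0" for M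
  proof (rule ccontr)
    assume "M \<noteq> m"
    then consider "M < m" | "m < M" by linarith
    then show False
    proof cases
      case 1
      have "gN \<alpha> m - gN \<alpha> M = (m - M) * ((m^2 + m*M + M^2 - 4*(m+M))/16 - 2*(4+\<alpha>))" by (rule gN_diff)
      moreover have "(m^2 + m*M + M^2 - 4*(m+M))/16 - 2*(4+\<alpha>) > 0"
        using bracket_pos[OF a that(1) that(2), of m] 1 by simp
      ultimately show False using 1 m that by simp
    next
      case 2
      have "gN \<alpha> M - gN \<alpha> m = (M - m) * ((M^2 + M*m + m^2 - 4*(M+m))/16 - 2*(4+\<alpha>))" by (rule gN_diff)
      moreover have "(M^2 + M*m + m^2 - 4*(M+m))/16 - 2*(4+\<alpha>) > 0"
        using bracket_pos[OF a m, of M] 2 by simp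
      ultimately show False using 2 m that by simp
    qed
  qed
  have "N_alpha \<alpha> = m"
    unfolding N_alpha_def
  proof (rule the_equality)
    show "m > 5 \<and> m^2 * (m - 4)^2 / 16 = 2 * (4 + \<alpha>) * (m - 2) * (m - 4)" using m gN_P[OF m(1)] by simp
    show "M = m" if "M > 5 \<and> M^2 * (M - 4)^2 / 16 = 2 * (4 + \<alpha>) * (M - 2) * (M - 4)" for M
      using that gN_P[of M \<alpha>] uniq by auto
  qed
  then have Nm: "N \<ge> m" using N by simp
  then show "N > 5" using m by simp
  have "gN \<alpha> N - gN \<alpha> m = (N - m) * ((N^2 + N*m + m^2 - 4*(N+m))/16 - 2*(4+\<alpha>))" by (rule gN_diff)
  moreover have "(N^2 + N*m + m^2 - 4*(N+m))/16 - 2*(4+\<alpha>) > 0" by (rule bracket_pos[OF a m Nm])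
  ultimately have gn: "gN \<alpha> N \<ge> 0" using Nm m by simp
  have "N^2*(N-4)^2/16 - 2*(4+\<alpha>)*(N-2)*(N-4) = (N - 4) * gN \<alpha> N"
    unfolding gN_def by (simp add: power2_eq_square algebra_simps)
  moreover have "(N - 4) * gN \<alpha> N \<ge> 0" using gn \<open>N > 5\<close> by simp
  ultimately show "2*(4+\<alpha>)*(N-2)*(N-4) \<le> N^2*(N-4)^2/16" by linarith
qed

lemma upper_bound:
  fixes n :: nat and \<alpha> \<beta> :: real and u :: "real \<Rightarrow> real"
  assumes a: "\<alpha> > -2" and N: "real n \<ge> N_alpha \<alpha>" and sol: "global_radial_sol n \<alpha> \<beta> u"
    and r: "r > 0"
  shows "u r \<le> - (4 + \<alpha>) * ln r + ln (2 * (4 + \<alpha>) * (real n - 2) * (real n - 4))"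
proof -
  define C where "C = 2 * (4 + \<alpha>) * (real n - 2) * (real n - 4)"
  have n5: "real n > 5" and CN: "C \<le> (real n)^2 * (real n - 4)^2 / 16"
    using N_alpha_prop[OF a N] by (auto simp: C_def)
  have C0: "C > 0" using n5 a by (simp add: C_def)
  have n4: "real n > 4" using n5 by simp
  obtain Z P Q S :: "real \<Rightarrow> real" and A B :: real where
    d: "\<And>t. (Z has_real_derivative P t) (at t)"
    "\<And>t. (P has_real_derivative ((2 - real n) * P t + Q t)) (at t)"
    "\<And>t. (Q has_real_derivative (2 * Q t + S t)) (at t)"
    "\<And>t. (S has_real_derivative ((4 - real n) * S t + C * (exp (Z t) - 1))) (at t)"
    and b: "\<And>t. t \<le> 0 \<Longrightarrow> \<bar>Z t\<bar> \<le> A + B * \<bar>t\<bar>"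
    "\<And>t. t \<le> 0 \<Longrightarrow> \<bar>P t\<bar> \<le> A"
    "\<And>t. t \<le> 0 \<Longrightarrow> \<bar>Q t\<bar> \<le> A"
    "\<And>t. t \<le> 0 \<Longrightarrow> \<bar>S t\<bar> \<le> A"
    "B \<ge> 0"
    and Zr: "\<And>r. r > 0 \<Longrightarrow> Z (ln r) = u r + (4 + \<alpha>) * ln r - ln C"
    by (rule radial_ode[OF sol a n4 C_def]) blast
  have "Z (ln r) \<le> 0" by (rule ode_main[OF n5 C0 CN d b])
  then have "u r + (4 + \<alpha>) * ln r - ln C \<le> 0" using Zr[OF r] by simp
  then show ?thesis unfolding C_def by (simp add: algebra_simps)
qed

lemma second_bound:
  fixes n :: nat and \<alpha> \<beta> :: real and u :: "real \<Rightarrow> real"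
  assumes a: "\<alpha> > -2" and N: "real n \<ge> N_alpha \<alpha>" and sol: "global_radial_sol n \<alpha> \<beta> u"
    and r: "r > 0"
  shows "r powr \<alpha> * exp (u r) \<le> (real n)^2 * (real n - 4)^2 / (16 * r ^ 4)"
proof -
  define C where "C = 2 * (4 + \<alpha>) * (real n - 2) * (real n - 4)"
  have n5: "real n > 5" and CN: "C \<le> (real n)^2 * (real n - 4)^2 / 16"
    using N_alpha_prop[OF a N] by (auto simp: C_def)
  have C0: "C > 0" using n5 a by (simp add: C_def)
  have "u r \<le> - (4 + \<alpha>) * ln r + ln C" using upper_bound[OF a N sol r] by (simp add: C_def)
  then have "exp (u r) \<le> exp (- (4 + \<alpha>) * ln r + ln C)" by simp
  also have "\<dots> = C * r powr (- (4 + \<alpha>))" using C0 r by (simp add: exp_add powr_def)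
  finally have "r powr \<alpha> * exp (u r) \<le> r powr \<alpha> * (C * r powr (- (4 + \<alpha>)))"
    by (intro mult_left_mono) auto
  also have "\<dots> = C * (r powr \<alpha> * r powr (- (4 + \<alpha>)))" by simp
  also have "r powr \<alpha> * r powr (- (4 + \<alpha>)) = r powr (-4)" by (simp add: powr_add[symmetric])
  also have "r powr (-4) = 1 / r ^ 4" using r by (simp add: powr_minus powr_realpow divide_inverse)
  also have "C * (1 / r ^ 4) \<le> ((real n)^2 * (real n - 4)^2 / 16) * (1 / r ^ 4)"
    using CN r by (intro mult_right_mono) auto
  also have "\<dots> = (real n)^2 * (real n - 4)^2 / (16 * r ^ 4)" by simp
  finally show ?thesis .
qed

theorem mainTheorem12:
  fixes \<alpha> :: real
  assumes "\<alpha> > -2"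
    and "real CARD('n) \<ge> N_alpha \<alpha>"
  shows "(\<forall>u. global_radial_sol CARD('n) \<alpha> (beta0 CARD('n) \<alpha>) u \<longrightarrow>
           (\<forall>r>0. u r \<le> - (4 + \<alpha>) * ln r
                    + ln (2 * (4 + \<alpha>) * (real CARD('n) - 2) * (real CARD('n) - 4))))
       \<and> (\<forall>\<beta> \<le> beta0 CARD('n) \<alpha>. \<forall>u. global_radial_sol CARD('n) \<alpha> \<beta> u \<longrightarrow>
           (\<forall>x::real^'n. x \<noteq> 0 \<longrightarrow>
              norm x powr \<alpha> * exp (u (norm x))
                \<le> (real CARD('n))^2 * (real CARD('n) - 4)^2 / (16 * norm x ^ 4)))"
  using upper_bound[OF assms] second_bound[OF assms] by auto

end
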